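(* Let $m \in \mathbb{N}$, $k \geq 4$ and $|q - q_k| < q_k^{-(m+2)k-3}$. Define $\epsilon_q$ by $1 = \pi_q((1^{k-1}0)^\infty) + \epsilon_q$. Then $$-q_k^{-(m+1)k+1} < \epsilon_q < q_k^{-(m+2)k+1}.$$
   Context: $q_k$ is the unique root in $(1,2)$ of $x^k - x^{k-1} - \cdots - x - 1 = 0$. $\pi_q((\epsilon_j)_{j\ge1}) = \sum_{j\ge1}\epsilon_j q^{-j}$, and $(1^{k-1}0)^\infty$ is the periodic sequence repeating the word of $k-1$ ones followed by a zero. *)

theory Defs
  imports "HOL-Analysis.Analysis"
begin

definition q_gen :: "nat \<Rightarrow> real" where
  "q_gen k = (THE x. 1 < x \<and> x < 2 \<and> x ^ k - (\<Sum>i<k. x ^ i) = 0)"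

definition pi_q :: "real \<Rightarrow> (nat \<Rightarrow> real) \<Rightarrow> real" where
  "pi_q q eps = (\<Sum>j. eps (Suc j) * (1 / q ^ Suc j))"

text \<open>The periodic sequence (1^(k-1) 0)^infinity, indexed from 1.\<close>
definition per_seq :: "nat \<Rightarrow> nat \<Rightarrow> real" where
  "per_seq k j = (if j mod k = 0 then 0 else 1)"

end

theory Submission
  imports Defs
begin

lemma G_mult: "x * y = (1::real) \<Longrightarrow> (\<Sum>i<n. x ^ Suc i) * y ^ n = (\<Sum>i<n. y ^ i)"
proof (induction n)
  case 0 then show ?case by simp
next
  case (Suc n)
  have "(\<Sum>i<Suc n. x ^ Suc i) * y ^ Suc n = y * ((\<Sum>i<n. x ^ Suc i) * y ^ n) + (x*y) ^ Suc n"
    by (simp add: algebra_simps power_mult_distrib)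
  also have "\<dots> = y * (\<Sum>i<n. y ^ i) + 1" using Suc by simp
  also have "\<dots> = (\<Sum>i<Suc n. y ^ i)"
    by (induction n) (auto simp: algebra_simps)
  finally show ?case .
qed

lemma G_strict: "0 < a \<Longrightarrow> a < (b::real) \<Longrightarrow> 0 < n \<Longrightarrow> (\<Sum>i<n. a ^ Suc i) < (\<Sum>i<n. b ^ Suc i)"
  by (intro sum_strict_mono) (auto intro!: power_strict_mono simp del: power_Suc)

lemma root_iff:
  assumes "y > 0"
  shows "(y ^ k - (\<Sum>i<k. y ^ i) = 0) \<longleftrightarrow> (\<Sum>i<k. (1/y) ^ Suc i) = (1::real)"
proof -
  have e: "(\<Sum>i<k. (1/y) ^ Suc i) * y ^ k = (\<Sum>i<k. y ^ i)" using assms by (intro G_mult) simp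
  have "y ^ k > 0" using assms by simp
  then show ?thesis using e
    by (smt (verit, best) mult_cancel_right1)
qed

lemma sum_pow2: "(\<Sum>i<n. (2::real) ^ i) = 2 ^ n - 1"
  by (induction n) auto

lemma q_gen_props:
  assumes "k \<ge> 4"
  shows "1 < q_gen k \<and> q_gen k < 2 \<and> (\<Sum>i<k. (1 / q_gen k) ^ Suc i) = 1"
proof -
  let ?P = "\<lambda>x::real. 1 < x \<and> x < 2 \<and> x ^ k - (\<Sum>i<k. x ^ i) = 0"
  let ?p = "\<lambda>x::real. x ^ k - (\<Sum>i<k. x ^ i)"
  have c: "continuous_on {1..2} ?p" by (intro continuous_intros)
  have p1: "?p 1 < 0" using assms by simp
  have p2: "?p 2 = 1" by (simp add: sum_pow2)
  obtain y where y: "1 \<le> y" "y \<le> 2" "?p y = 0"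
    using IVT'[of ?p 1 0 2, OF _ _ _ c] p1 p2 by auto
  have "y \<noteq> 1" "y \<noteq> 2" using y p1 p2 by auto
  then have Py: "?P y" using y by auto
  have uniq: "x = y" if "?P x" for x
  proof (rule ccontr)
    assume "x \<noteq> y"
    have gx: "(\<Sum>i<k. (1/x) ^ Suc i) = 1" using that root_iff[of x k] by auto
    have gy: "(\<Sum>i<k. (1/y) ^ Suc i) = 1" using Py root_iff[of y k] by auto
    show False
    proof (cases "x < y")
      case True
      then have "1/y < 1/x" using that by (simp add: divide_strict_left_mono)
      then show ?thesis using G_strict[of "1/y" "1/x" k] gx gy Py assms by auto
    next
      case False
      then have "y < x" using \<open>x \<noteq> y\<close> by auto
      then have "1/x < 1/y" using Py by (simp add: divide_strict_left_mono)
      then show ?thesis using G_strict[of "1/x" "1/y" k] gx gy that assms by auto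
    qed
  qed
  have "q_gen k = y" unfolding q_gen_def
  proof (rule the_equality)
    show "?P y" by (rule Py)
  next
    fix x assume "?P x" then show "x = y" by (rule uniq)
  qed
  then show ?thesis using Py root_iff[of y k] by auto
qed

lemma q_gen_lower:
  assumes "k \<ge> 4"
  shows "9/5 < q_gen k"
proof (rule ccontr)
  let ?Q = "q_gen k"
  assume "\<not> 9/5 < ?Q"
  then have "?Q \<le> 9/5" by simp
  have Q1: "1 < ?Q" using q_gen_props[OF assms] by auto
  have X: "5/9 \<le> 1/?Q" using \<open>?Q \<le> 9/5\<close> Q1 by (simp add: field_simps)
  have "(\<Sum>i<4. (5/9::real) ^ Suc i) \<le> (\<Sum>i<4. (1/?Q) ^ Suc i)"
    using X by (intro sum_mono power_mono) auto
  also have "\<dots> \<le> (\<Sum>i<k. (1/?Q) ^ Suc i)"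
    using assms Q1 by (intro sum_mono2) auto
  also have "\<dots> = 1" using q_gen_props[OF assms] by auto
  finally show False by (simp add: numeral_eq_Suc)
qed


lemma pow_diff_bound:
  fixes a b c :: real
  assumes "0 \<le> a" "a \<le> c" "0 \<le> b" "b \<le> c" "0 < c"
  shows "\<bar>a ^ n - b ^ n\<bar> \<le> real n * c ^ (n - 1) * \<bar>a - b\<bar>"
proof (cases n)
  case 0 then show ?thesis by simp
next
  case (Suc n')
  have "norm ((a/c)^n - (b/c)^n) \<le> n * norm (a/c - b/c)"
    using assms by (intro norm_power_diff) auto
  then have h: "\<bar>a^n - b^n\<bar> / c^n \<le> n * (\<bar>a - b\<bar> / c)"
    using assms by (simp add: power_divide diff_divide_distrib[symmetric])
  have "\<bar>a^n - b^n\<bar> \<le> c^n * (n * (\<bar>a - b\<bar> / c))"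
    using h assms by (simp add: field_simps)
  also have "\<dots> = real n * c ^ (n - 1) * \<bar>a - b\<bar>"
    using assms Suc by (simp add: field_simps)
  finally show ?thesis .
qed

lemma arith_geo: "(\<Sum>i<n. real (Suc i) * c ^ i) * (1 - c)^2 = 1 - (n+1) * c^n + n * c^(n+1)"
  by (induction n) (auto simp: algebra_simps power2_eq_square)

lemma arith_geo_bound:
  assumes "0 \<le> c" "c < 1"
  shows "(\<Sum>i<n. real (Suc i) * c ^ i) \<le> 1 / (1 - c)^2"
proof -
  have "real n * c \<le> real n * 1" using assms by (intro mult_left_mono) auto
  then have "c^n * (n * c) \<le> c^n * (n+1)" using assms by (intro mult_left_mono) auto
  then have "(real n + 1) * c^n - real n * c^(n+1) \<ge> 0" by (simp add: algebra_simps)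
  then have "(\<Sum>i<n. real (Suc i) * c ^ i) * (1 - c)^2 \<le> 1" using arith_geo[where n=n and c=c] by linarith
  then show ?thesis using assms by (simp add: field_simps)
qed

lemma pi_closed:
  assumes "k \<ge> 1" "q > 1"
  shows "pi_q q (per_seq k) = (\<Sum>i<k-1. (1/q)^Suc i) / (1 - (1/q)^k)"
proof -
  define x where "x = 1/q"
  have x0: "0 < x" "x < 1" using assms by (auto simp: x_def)
  define f where "f j = per_seq k (Suc j) * (1 / q ^ Suc j)" for j
  have f: "f j = per_seq k (Suc j) * x ^ Suc j" for j
    by (simp add: f_def x_def power_one_over)
  have sg: "summable (\<lambda>j. x ^ Suc j)"
    using x0 by (simp add: summable_geometric summable_mult)
  have "summable f"
    by (rule summable_comparison_test'[OF sg, of 0]) (use x0 in \<open>auto simp: f per_seq_def\<close>)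
  moreover have "pi_q q (per_seq k) = suminf f" by (simp add: pi_q_def f_def[abs_def])
  ultimately have fs: "f sums (pi_q q (per_seq k))"
    by (simp add: summable_sums)
  define B where "B = (\<Sum>i<k-1. x^Suc i)"
  have blk: "sum f {n*k..<n*k+k} = (x^k)^n * B" for n
  proof -
    have "sum f {n*k..<n*k+k} = (\<Sum>i\<in>{0..<k}. f (i + n*k))"
      using sum.shift_bounds_nat_ivl[of f 0 "n*k" k] by (simp add: add.commute)
    also have "\<dots> = (\<Sum>i<k. f (i + n*k))" by (simp add: atLeast0LessThan)
    also have "\<dots> = (\<Sum>i<Suc (k-1). f (i + n*k))" using assms by simp
    also have "\<dots> = (\<Sum>i<k-1. f (i + n*k)) + f (k - 1 + n*k)" by simp
    also have "f (k - 1 + n*k) = 0"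
      using assms by (simp add: f per_seq_def)
    also have "(\<Sum>i<k-1. f (i + n*k)) = (\<Sum>i<k-1. (x^k)^n * x^Suc i)"
    proof (rule sum.cong)
      fix i assume "i \<in> {..<k-1}"
      then have i: "Suc i < k" by auto
      have "Suc (i + n*k) mod k = Suc i mod k"
        by (simp only: add_Suc[symmetric] mod_mult_self1)
      also have "\<dots> = Suc i" using i by simp
      finally have "Suc (i + n*k) mod k = Suc i" .
      then have "per_seq k (Suc (i + n*k)) = 1" using i by (simp add: per_seq_def)
      then show "f (i + n*k) = (x^k)^n * x^Suc i"
        by (simp add: f power_add power_mult mult.commute)
    qed simp
    finally show ?thesis by (simp add: B_def sum_distrib_left)
  qed
  have "(\<lambda>n. (x^k)^n) sums (1 / (1 - x^k))"
    using x0 assms(1) by (intro geometric_sums) (simp add: power_less_one_iff abs_of_pos)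
  then have "(\<lambda>n. (x^k)^n * B) sums (1 / (1 - x^k) * B)" by (rule sums_mult2)
  moreover have "(\<lambda>n. sum f {n*k..<n*k+k}) sums (pi_q q (per_seq k))"
    using sums_group[OF fs] assms by simp
  ultimately have "pi_q q (per_seq k) = 1 / (1 - x^k) * B"
    using blk sums_unique2 by auto
  then show ?thesis by (simp add: B_def x_def)
qed


theorem lemma3p5:
  fixes m k :: nat and q eps_q :: real
  assumes "k \<ge> 4"
    and "\<bar>q - q_gen k\<bar> < 1 / q_gen k ^ ((m + 2) * k + 3)"
    and "1 = pi_q q (per_seq k) + eps_q"
  shows "- (1 / q_gen k ^ ((m + 1) * k - 1)) < eps_q \<and> eps_q < 1 / q_gen k ^ ((m + 2) * k - 1)"
proof -
  define Q where "Q = q_gen k"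
  define N where "N = (m + 2) * k"
  have Qp: "1 < Q" "Q < 2" "(\<Sum>i<k. (1 / Q) ^ Suc i) = 1"
    using q_gen_props[OF assms(1)] by (auto simp: Q_def)
  have Ql: "9/5 < Q" using q_gen_lower[OF assms(1)] by (simp add: Q_def)
  have N8: "N \<ge> 8" using assms(1) by (simp add: N_def)
  define d where "d = 1 / Q ^ (N + 3)"
  have dq: "\<bar>q - Q\<bar> < d" using assms(2) by (simp add: Q_def N_def d_def)
  have "(9/5::real)^11 \<le> Q^11" using Ql by (intro power_mono) auto
  also have "\<dots> \<le> Q^(N+3)" using Qp N8 by (intro power_increasing) auto
  finally have h11: "(9/5::real)^11 \<le> Q^(N+3)" .
  have "(20::real) \<le> (9/5)^11" by (simp add: power_divide)
  then have "20 \<le> Q^(N+3)" using h11 by linarith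
  then have d20: "d \<le> 1/20" by (simp add: d_def field_simps)
  have q74: "7/4 < q" using dq d20 Ql by linarith
  define x where "x = 1/q"
  define X where "X = 1/Q"
  have x0: "0 < x" "x < 4/7" using q74 by (auto simp: x_def field_simps)
  have X0: "0 < X" "X < 4/7" using Ql by (auto simp: X_def field_simps)
  have GX: "(\<Sum>i<k. X ^ Suc i) = 1" using Qp by (simp add: X_def)
  define B where "B = (\<Sum>i<k-1. x^Suc i)"
  have pi: "pi_q q (per_seq k) = B / (1 - x^k)"
    using pi_closed[of k q] assms(1) q74 by (simp add: B_def x_def)
  have Gx: "(\<Sum>i<k. x ^ Suc i) = B + x^k"
  proof -
    obtain k' where k': "k = Suc k'" using assms(1) by (cases k) auto
    show ?thesis unfolding B_def k' by (simp del: power_Suc)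
  qed
  have xk: "x^k \<le> x" using x0 assms(1) power_decreasing[of 1 k x] by simp
  have den: "3/7 \<le> 1 - x^k" using xk x0 by linarith
  have eps: "eps_q = ((\<Sum>i<k. X ^ Suc i) - (\<Sum>i<k. x ^ Suc i)) / (1 - x^k)"
  proof -
    have "eps_q = 1 - B/(1-x^k)" using assms(3) pi by simp
    also have "\<dots> = ((1 - x^k) - B)/(1-x^k)" using den by (simp add: diff_divide_distrib)
    also have "\<dots> = ((\<Sum>i<k. X ^ Suc i) - (\<Sum>i<k. x ^ Suc i)) / (1 - x^k)"
      by (simp only: GX Gx) (simp add: algebra_simps)
    finally show ?thesis .
  qed
  have "\<bar>(\<Sum>i<k. X ^ Suc i) - (\<Sum>i<k. x ^ Suc i)\<bar> = \<bar>\<Sum>i<k. X ^ Suc i - x ^ Suc i\<bar>"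
    by (simp add: sum_subtractf)
  also have "\<dots> \<le> (\<Sum>i<k. \<bar>X ^ Suc i - x ^ Suc i\<bar>)" by (rule sum_abs)
  also have "\<dots> \<le> (\<Sum>i<k. real (Suc i) * (4/7) ^ i * \<bar>X - x\<bar>)"
  proof (rule sum_mono)
    fix i assume "i \<in> {..<k}"
    show "\<bar>X ^ Suc i - x ^ Suc i\<bar> \<le> real (Suc i) * (4/7) ^ i * \<bar>X - x\<bar>"
      using pow_diff_bound[of X "4/7" x "Suc i"] X0 x0 by simp
  qed
  also have "\<dots> = (\<Sum>i<k. real (Suc i) * (4/7) ^ i) * \<bar>X - x\<bar>"
    by (simp add: sum_distrib_right)
  also have "\<dots> \<le> 1 / (1 - 4/7)^2 * \<bar>X - x\<bar>"
    by (intro mult_right_mono arith_geo_bound) auto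
  finally have Gd: "\<bar>(\<Sum>i<k. X ^ Suc i) - (\<Sum>i<k. x ^ Suc i)\<bar> \<le> 49/9 * \<bar>X - x\<bar>"
    by (simp add: power2_eq_square)
  have "\<bar>X - x\<bar> = \<bar>q - Q\<bar> / (q * Q)"
    using q74 Ql by (simp add: X_def x_def field_simps abs_div)
  also have "\<dots> \<le> \<bar>q - Q\<bar> / (63/20)"
  proof (rule divide_left_mono)
    have "(7/4) * (9/5) \<le> q * Q" using q74 Ql by (intro mult_mono) auto
    then show "63/20 \<le> q * Q" by simp
  qed (use q74 Ql in auto)
  finally have Xx: "\<bar>X - x\<bar> \<le> \<bar>q - Q\<bar> * (20/63)" by simp
  have "\<bar>eps_q\<bar> = \<bar>(\<Sum>i<k. X ^ Suc i) - (\<Sum>i<k. x ^ Suc i)\<bar> / (1 - x^k)"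
    using eps den by (simp add: abs_div)
  also have "\<dots> \<le> (49/9 * (\<bar>q - Q\<bar> * (20/63))) / (3/7)"
    using Gd Xx den by (intro frac_le) auto
  also have "\<dots> \<le> 5 * \<bar>q - Q\<bar>" by simp
  also have "\<dots> < 5 * d" using dq by simp
  also have "\<dots> \<le> Q^4 * d"
  proof -
    have "(9/5::real)^4 \<le> Q^4" using Ql by (intro power_mono) auto
    moreover have "(5::real) \<le> (9/5)^4" by (simp add: power_divide)
    moreover have "0 \<le> d" using Qp by (simp add: d_def)
    ultimately show ?thesis by (intro mult_right_mono) auto
  qed
  also have "\<dots> = 1 / Q^(N-1)"
  proof -
    have "N + 3 = 4 + (N - 1)" using N8 by simp
    then have "Q^(N+3) = Q^(4 + (N-1))" by (simp only:)
    then have "Q^(N+3) = Q^4 * Q^(N-1)" by (simp only: power_add)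
    then show ?thesis using Qp by (simp add: d_def)
  qed
  finally have E: "\<bar>eps_q\<bar> < 1 / Q^(N-1)" .
  have "(m+1)*k \<le> (m+2)*k" by (intro mult_le_mono1) simp
  then have "(m+1)*k - 1 \<le> N - 1" unfolding N_def by (rule diff_le_mono)
  then have "Q^((m+1)*k-1) \<le> Q^(N-1)" using Qp by (intro power_increasing) auto
  then have "1 / Q^(N-1) \<le> 1 / Q^((m+1)*k-1)" using Qp by (intro divide_left_mono) auto
  then show ?thesis using E by (auto simp: Q_def N_def)
qed
end
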